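(* Let $k$ be a positive integer and let $\zeta$ be a primitive $2k$-th root of unity. Let $Q_k$ denote the set of quasipolarities of $\mathbb{Z}/2k\mathbb{Z}$. Then \[ \sum_{\pi\in Q_{k}}\prod_{j=0}^{2k-1}\frac{1+\zeta^{j-\pi(j)}}{1-\zeta^{j-\pi(j)}} = [2\mid k]\,(|Q_{2k}|-|Q_{k}|) = [2\mid k]\,(s_{1}^{*}(2k)-s_{1}^{*}(k)), \] where $[2\mid k]$ equals $1$ if $k$ is even and $0$ if $k$ is odd.
   Context: The affine general linear group $\overrightarrow{GL}(\mathbb{Z}/m\mathbb{Z})$ consists of the maps $e^{u}.v:\mathbb{Z}/m\mathbb{Z}\to\mathbb{Z}/m\mathbb{Z}$, $x\mapsto vx+u$, with $u\in\mathbb{Z}/m\mathbb{Z}$ and $v\in(\mathbb{Z}/m\mathbb{Z})^{\times}$. For a positive integer $k$, $Q_k$ is the set of quasipolarities of $\mathbb{Z}/2k\mathbb{Z}$, i.e. elements $\pi\in\overrightarrow{GL}(\mathbb{Z}/2k\mathbb{Z})$ that are involutions ($\pi\circ\pi=\mathrm{id}$) and derangements ($\pi(x)\neq x$ for all $x$); thus $Q_{2k}$ is the corresponding set for $\mathbb{Z}/4k\mathbb{Z}$. Elements $j\in\{0,\dots,2k-1\}$ are identified with residues mod $2k$; the exponent $j-\pi(j)$ is taken mod $2k$ (well defined since $\zeta^{2k}=1$), and denominators are nonzero because $\pi$ is a derangement. A divisor $d$ of $n$ is unitary if $\gcd(d,n/d)=1$, and $s_1^{*}(n)$ denotes the sum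 of the unitary divisors of $n$. *)

theory Defs
  imports Complex_Main "HOL-Computational_Algebra.Primes" "HOL-Library.FuncSet"
begin

text \<open>Elements of the affine general linear group of Z/mZ, as maps on the
  residues {0..<m} (restricted, so that distinct maps are distinct functions):
  x maps to v x + u with u a residue and v a unit mod m.\<close>
definition affine_maps :: "nat \<Rightarrow> (nat \<Rightarrow> nat) set" where
  "affine_maps m = {restrict (\<lambda>x. (v * x + u) mod m) {0..<m} | u v.
      u < m \<and> v < m \<and> coprime v m}"

definition quasipolarities :: "nat \<Rightarrow> (nat \<Rightarrow> nat) set" where
  "quasipolarities m = {\<pi> \<in> affine_maps m.
      (\<forall>x\<in>{0..<m}. \<pi> (\<pi> x) = x) \<and> (\<forall>x\<in>{0..<m}. \<pi> x \<noteq> x)}"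

definition Q :: "nat \<Rightarrow> (nat \<Rightarrow> nat) set" where
  "Q k = quasipolarities (2 * k)"

definition primitive_root_of_unity :: "nat \<Rightarrow> complex \<Rightarrow> bool" where
  "primitive_root_of_unity n z \<longleftrightarrow> z ^ n = 1 \<and> (\<forall>d. 0 < d \<and> d < n \<longrightarrow> z ^ d \<noteq> 1)"

definition unitary_divisor_sum :: "nat \<Rightarrow> nat" where
  "unitary_divisor_sum n = (\<Sum>d\<in>{d. d dvd n \<and> coprime d (n div d)}. d)"

end

theory Submission
  imports Defs
begin
lemma lin_solv:
  fixes a m c :: nat
  assumes "m > 0" "gcd a m dvd c"
  shows "\<exists>j::nat. m dvd a * j + c"
proof -
  obtain s where s: "c = gcd a m * s" using assms(2) by blast
  obtain x y :: int where xy: "x * int a + y * int m = gcd (int a) (int m)" using bezout_int by blast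
  define j where "j = nat ((- x * int s) mod int m)"
  have jj: "int j = (- x * int s) mod int m" using assms(1) unfolding j_def by simp
  have "int (a * j + c) mod int m = (int a * ((- x * int s) mod int m) + int c) mod int m"
    using jj by simp
  also have "\<dots> = (int a * (- x * int s) + int c) mod int m"
    by (metis mod_add_left_eq mod_mult_right_eq)
  also have "int a * (- x * int s) + int c = int m * (y * int s)"
  proof -
    have "int c = (x * int a + y * int m) * int s" using xy s by (simp add: gcd_int_def)
    then show ?thesis by (simp add: algebra_simps)
  qed
  finally have "int m dvd int (a * j + c)" by (simp add: mod_eq_0_iff_dvd)
  then show ?thesis by (metis int_dvd_int_iff)
qed
definition pif :: "nat \<Rightarrow> nat \<Rightarrow> nat \<Rightarrow> nat \<Rightarrow> nat" where
  "pif m u v x = (v * x + u) mod m"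

definition SP :: "nat \<Rightarrow> (nat \<times> nat) set" where
  "SP m = {(u,v). u < m \<and> v < m \<and> coprime v m \<and> (\<forall>x<m. pif m u v (pif m u v x) = x) \<and> (\<forall>x<m. pif m u v x \<noteq> x)}"

definition AP :: "nat \<Rightarrow> (nat \<times> nat) set" where
  "AP k = {(a,t). a < k \<and> gcd a k * gcd (Suc a) k = k \<and> t < gcd (Suc a) k}"

definition psi :: "nat \<Rightarrow> nat \<times> nat \<Rightarrow> nat \<times> nat" where
  "psi k = (\<lambda>(a,t). (gcd a k * (2*t+1), 2*a+1))"

lemma mod_add_self_cancel: "(x + y) mod m = x mod m \<Longrightarrow> m dvd (y::nat)"
  by (metis mod_eq_dvd_iff_nat le_add1 add_diff_cancel_left')

lemma mod_aff: "((v::nat) * (x mod m) + u) mod m = (v*x+u) mod m"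
  by (metis mod_add_left_eq mod_mult_right_eq)

lemma coprime_sq1:
  fixes v m n :: nat
  assumes "v * v = m * n + 1"
  shows "coprime v m"
proof -
  have "coprime (m * n + 1) m" by (metis coprime_mult_right_iff coprime_add_one_left)
  then have "coprime (v*v) m" using assms by simp
  then show ?thesis by simp
qed

lemma AP_SP:
  assumes k: "k > 0" and A: "(a,t) \<in> AP k"
  shows "psi k (a,t) \<in> SP (2*k)"
proof -
  define g1 where "g1 = gcd a k"
  define g2 where "g2 = gcd (Suc a) k"
  have a: "a < k" and g: "g1 * g2 = k" and t: "t < g2" using A unfolding AP_def g1_def g2_def by auto
  have g1p: "g1 > 0" using k g1_def by simp
  have g1a: "g1 dvd a" and g2a: "g2 dvd Suc a" unfolding g1_def g2_def by auto
  define u where "u = g1 * (2*t+1)"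
  define v where "v = 2*a+1"
  have ps: "psi k (a,t) = (u,v)" unfolding psi_def u_def v_def g1_def by simp
  have u: "u < 2*k"
  proof -
    have "2*t+1 < 2*g2" using t by simp
    then have "g1 * (2*t+1) < g1 * (2*g2)" using g1p by (rule mult_strict_left_mono)
    then show ?thesis using g unfolding u_def by (simp add: algebra_simps)
  qed
  have v: "v < 2*k" using a v_def by simp
  have kaa: "k dvd a * Suc a" using g g1a g2a by (metis mult_dvd_mono)
  then obtain n where n: "a * Suc a = k * n" by blast
  have vv: "v * v = (2*k) * (2*n) + 1"
  proof -
    have "v * v = 4 * (a * Suc a) + 1" unfolding v_def by (simp add: algebra_simps)
    then show ?thesis using n by simp
  qed
  have cop: "coprime v (2*k)" using coprime_sq1[OF vv] .
  obtain r where r: "Suc a = g2 * r" using g2a by blast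
  have vu: "(v+1) * u = (2*k) * (r * (2*t+1))"
  proof -
    have "(v+1) * u = 2*(Suc a)*g1*(2*t+1)" unfolding u_def v_def by (simp add: algebra_simps)
    also have "\<dots> = 2*(g1*g2)*r*(2*t+1)" unfolding r by (simp add: algebra_simps)
    finally show ?thesis unfolding g by (simp add: algebra_simps)
  qed
  have inv: "pif (2*k) u v (pif (2*k) u v x) = x" if x: "x < 2*k" for x
  proof -
    have "pif (2*k) u v (pif (2*k) u v x) = (v * (v * x + u) + u) mod (2*k)"
      unfolding pif_def by (metis mod_add_left_eq mod_mult_right_eq)
    also have "v * (v * x + u) + u = v * v * x + (v+1) * u" by (simp add: algebra_simps)
    also have "\<dots> = x + (2*k) * (2*n*x + r*(2*t+1))"
      using vv vu by (simp add: algebra_simps)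
    also have "\<dots> mod (2*k) = x" using x by simp
    finally show ?thesis .
  qed
  have der: "pif (2*k) u v x \<noteq> x" if x: "x < 2*k" for x
  proof
    assume "pif (2*k) u v x = x"
    then have "(x + (2*a*x + u)) mod (2*k) = x mod (2*k)" unfolding pif_def v_def using x
      by (simp add: algebra_simps)
    then have "2*k dvd 2*a*x + u" by (rule mod_add_self_cancel)
    moreover have "2*g1 dvd 2*k" using g by (metis dvd_triv_left mult_dvd_mono dvd_refl)
    ultimately have "2*g1 dvd 2*a*x + u" by (rule dvd_trans[rotated])
    moreover have "2*g1 dvd 2*a*x" using g1a by (simp add: mult_dvd_mono)
    ultimately have "2*g1 dvd u" by (simp add: dvd_add_right_iff)
    then have "g1 * 2 dvd g1 * (2*t+1)" unfolding u_def by (simp add: mult.commute)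
    then have "2 dvd 2*t+1" using g1p nat_mult_dvd_cancel1 by blast
    then show False by simp
  qed
  show ?thesis unfolding ps SP_def using u v cop inv der by auto
qed
lemma SP_AP:
  assumes k: "k > 0" and S: "(u,v) \<in> SP (2*k)"
  shows "\<exists>a t. (a,t) \<in> AP k \<and> (u,v) = psi k (a,t)"
proof -
  have u: "u < 2*k" and v: "v < 2*k" and cop: "coprime v (2*k)"
    and inv: "\<And>x. x < 2*k \<Longrightarrow> pif (2*k) u v (pif (2*k) u v x) = x"
    and der: "\<And>x. x < 2*k \<Longrightarrow> pif (2*k) u v x \<noteq> x"
    using S unfolding SP_def by auto
  have "odd v"
  proof
    assume "even v"
    then have "2 dvd gcd v (2*k)" by simp
    then show False using cop by simp
  qed
  define a where "a = v div 2"
  have va: "v = 2*a+1" using \<open>odd v\<close> unfolding a_def by presburger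
  have a: "a < k" using v va by simp
  have p0: "pif (2*k) u v 0 = u" unfolding pif_def using u by (metis add_0 mult_0_right mod_less)
  have "pif (2*k) u v (pif (2*k) u v 0) = 0" using inv[of 0] k by simp
  then have "(v*u+u) mod (2*k) = 0" unfolding p0 unfolding pif_def .
  then have "2*k dvd v*u+u" by (simp add: mod_eq_0_iff_dvd)
  moreover have "v*u+u = 2*(Suc a * u)" unfolding va by (simp add: algebra_simps)
  ultimately have "2*k dvd 2*(Suc a * u)" by simp
  then have kd1: "k dvd Suc a * u" using nat_mult_dvd_cancel1[of 2 k "Suc a * u"] by simp
  then obtain q where q: "Suc a * u = k * q" by blast
  have "pif (2*k) u v (pif (2*k) u v 1) = 1" using inv[of 1] k by simp
  then have "(v * (v + u) + u) mod (2*k) = 1"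
    unfolding pif_def mod_aff by simp
  moreover have "v * (v + u) + u = 1 + (4*(a * Suc a) + 2*k*q)"
    using q unfolding va by (simp add: algebra_simps)
  ultimately have "(1 + (4*(a * Suc a) + 2*k*q)) mod (2*k) = 1 mod (2*k)" using k by simp
  then have "2*k dvd 4*(a * Suc a) + 2*k*q" by (rule mod_add_self_cancel)
  then have "2*k dvd 4*(a * Suc a)" by (simp add: dvd_add_left_iff)
  then have "2*k dvd 2*(2*a * Suc a)" by (simp add: algebra_simps)
  then have kd2: "k dvd 2*a * Suc a" using nat_mult_dvd_cancel1[of 2 k "2*a * Suc a"] by simp
  have der2: "\<not> 2*k dvd 2*a*x + u" for x
  proof
    assume h: "2*k dvd 2*a*x + u"
    define x' where "x' = x mod (2*k)"
    have x': "x' < 2*k" using k unfolding x'_def by simp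
    have "(2*a*x' + u) mod (2*k) = (2*a*x + u) mod (2*k)"
      unfolding x'_def by (rule mod_aff)
    then have "2*k dvd 2*a*x' + u" using h by (simp add: mod_eq_0_iff_dvd[symmetric])
    then obtain r where r: "2*a*x' + u = 2*k*r" by blast
    have "(x' + (2*a*x' + u)) mod (2*k) = x'" unfolding r using x' by simp
    then have "pif (2*k) u v x' = x'" unfolding pif_def va by (simp add: algebra_simps)
    then show False using der x' by blast
  qed
  define g1 where "g1 = gcd a k"
  define g2 where "g2 = gcd (Suc a) k"
  have g1p: "g1 > 0" and g2p: "g2 > 0" using k unfolding g1_def g2_def by auto
  have cop12: "coprime g1 g2" unfolding g1_def g2_def
    by (meson coprime_Suc_right_nat coprime_divisors gcd_dvd1)
  have g1u: "g1 dvd u"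
  proof -
    have "g1 dvd Suc a * u" using kd1 unfolding g1_def by (meson dvd_trans gcd_dvd2)
    moreover have "coprime g1 (Suc a)" unfolding g1_def
      by (meson coprime_Suc_right_nat coprime_divisors gcd_dvd1 dvd_refl)
    ultimately show ?thesis using coprime_dvd_mult_right_iff by blast
  qed
  have gg: "gcd (2*a) (2*k) = 2*g1" unfolding g1_def by (simp add: gcd_mult_distrib_nat)
  have n2g1: "\<not> 2*g1 dvd u"
  proof
    assume "2*g1 dvd u"
    then obtain j where "2*k dvd 2*a*j + u" using lin_solv[of "2*k" "2*a" u] k gg by auto
    then show False using der2 by blast
  qed
  obtain a' h where ah: "Suc a = a' * g2" "k = h * g2" "coprime a' h"
    using gcd_coprime_exists[of "Suc a" k] g2p unfolding g2_def by auto
  have hu: "h dvd u"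
  proof -
    have "h * g2 dvd (a' * u) * g2" using kd1 ah by (simp add: algebra_simps)
    then have "h dvd a' * u" using g2p by simp
    then show ?thesis using ah(3) by (metis coprime_commute coprime_dvd_mult_right_iff)
  qed
  have h2a: "h dvd 2*a"
  proof -
    have "h * g2 dvd (2*a * a') * g2" using kd2 ah by (simp add: algebra_simps)
    then have "h dvd 2*a * a'" using g2p by simp
    then show ?thesis using ah(3) by (metis coprime_commute coprime_dvd_mult_left_iff)
  qed
  have "h dvd 2*k" using ah by simp
  then have h2g: "h dvd 2*g1" using h2a gg by (metis gcd_greatest)
  have g1h: "g1 dvd h"
  proof -
    have "g1 dvd h * g2" using ah unfolding g1_def by simp
    then show ?thesis using cop12 by (metis coprime_dvd_mult_left_iff)
  qed
  then obtain c where c: "h = g1 * c" by blast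
  have "g1 * c dvd g1 * 2" using h2g c by (simp add: mult.commute)
  then have "c dvd 2" using g1p nat_mult_dvd_cancel1 by blast
  moreover have "c \<noteq> 0" using c ah k by auto
  ultimately have "c = 1 \<or> c = 2" using dvd_imp_le[of c 2] by (auto simp: le_Suc_eq)
  moreover have "c \<noteq> 2" using hu c n2g1 by (auto simp: mult.commute)
  ultimately have "c = 1" by blast
  then have kg: "g1 * g2 = k" using ah c by simp
  obtain w where w: "u = g1 * w" using g1u by blast
  have "odd w" using n2g1 w by auto
  define t where "t = w div 2"
  have wt: "w = 2*t+1" using \<open>odd w\<close> unfolding t_def by presburger
  have e2: "g1 * (2 * g2) = 2*k" using kg by simp
  have "g1 * w < g1 * (2 * g2)" unfolding e2 using u w by (simp only:)
  then have "w < 2*g2" by simp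
  then have t: "t < g2" using wt by simp
  have "(a,t) \<in> AP k" unfolding AP_def using a kg t unfolding g1_def g2_def by simp
  moreover have "(u,v) = psi k (a,t)" unfolding psi_def using w wt va g1_def by simp
  ultimately show ?thesis by blast
qed

lemma psi_inj: assumes "k > 0" shows "inj_on (psi k) (AP k)"
proof (rule inj_onI)
  fix x y assume x: "x \<in> AP k" and y: "y \<in> AP k" and e: "psi k x = psi k y"
  obtain a t where xa: "x = (a,t)" by fastforce
  obtain a' t' where ya: "y = (a',t')" by fastforce
  have "2*a+1 = 2*a'+1" using e unfolding xa ya psi_def by simp
  then have aa: "a = a'" by simp
  have "gcd a k * (2*t+1) = gcd a k * (2*t'+1)" using e unfolding xa ya psi_def aa by simp
  moreover have "gcd a k > 0" using assms by simp
  ultimately have "t = t'" using assms by auto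
  then show "x = y" using xa ya aa by simp
qed

lemma SP_eq: assumes "k > 0" shows "SP (2*k) = psi k ` AP k"
proof
  show "SP (2*k) \<subseteq> psi k ` AP k"
  proof
    fix p assume "p \<in> SP (2*k)"
    moreover obtain u v where "p = (u,v)" by fastforce
    ultimately show "p \<in> psi k ` AP k" using SP_AP[OF assms] by fastforce
  qed
  show "psi k ` AP k \<subseteq> SP (2*k)" using AP_SP[OF assms] by auto
qed

lemma AP_finite: "finite (AP k)"
proof -
  have "AP k \<subseteq> {..<k} \<times> {..<k}"
  proof
    fix p assume p: "p \<in> AP k"
    obtain a t where pa: "p = (a,t)" by fastforce
    have "a < k" "t < gcd (Suc a) k" using p pa unfolding AP_def by auto
    moreover have "gcd (Suc a) k \<le> k" using \<open>a < k\<close> by (simp add: gcd_le2_nat)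
    ultimately have "t < k" by linarith
    then show "p \<in> {..<k} \<times> {..<k}" using pa \<open>a < k\<close> by auto
  qed
  then show ?thesis by (rule finite_subset) simp
qed

definition UD :: "nat \<Rightarrow> nat set" where
  "UD k = {d. d dvd k \<and> coprime d (k div d)}"

definition VA :: "nat \<Rightarrow> nat set" where
  "VA k = {a. a < k \<and> gcd a k * gcd (Suc a) k = k}"

lemma AP_Sigma: "AP k = Sigma (VA k) (\<lambda>a. {..<gcd (Suc a) k})"
  unfolding AP_def VA_def by auto

lemma cop_gcds: "coprime (gcd a k) (gcd (Suc a) k)"
  by (meson coprime_Suc_right_nat coprime_divisors gcd_dvd1)

lemma VA_bij: assumes k: "k > 0" shows "bij_betw (\<lambda>a. gcd (Suc a) k) (VA k) (UD k)"
proof -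
  have inj: "inj_on (\<lambda>a. gcd (Suc a) k) (VA k)"
  proof (rule inj_onI)
    fix a b assume a: "a \<in> VA k" and b: "b \<in> VA k" and e: "gcd (Suc a) k = gcd (Suc b) k"
    define d where "d = gcd (Suc a) k"
    have ka: "gcd a k * d = k" and kb: "gcd b k * d = k" using a b e unfolding VA_def d_def by auto
    have dp: "d > 0" using k d_def by simp
    have g: "gcd a k = gcd b k" using ka kb dp by (metis mult_right_cancel not_gr0)
    define g1 where "g1 = gcd a k"
    have cop: "coprime g1 d" unfolding g1_def d_def by (rule cop_gcds)
    have h1: "int g1 dvd int a - int b"
      by (metis dvd_diff g g1_def gcd_dvd1 int_dvd_int_iff)
    have "int d dvd int (Suc a) - int (Suc b)"
      by (metis dvd_diff e d_def gcd_dvd1 int_dvd_int_iff)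
    then have h2: "int d dvd int a - int b" by simp
    have "int g1 * int d dvd int a - int b"
      using h1 h2 cop by (simp add: divides_mult)
    then have kd: "int k dvd int a - int b" using ka g1_def by (metis of_nat_mult)
    have "a < k" "b < k" using a b unfolding VA_def by auto
    have "int a mod int k = int b mod int k" using kd by (simp add: mod_eq_dvd_iff)
    then have "a mod k = b mod k" by (metis of_nat_eq_iff of_nat_mod)
    then show "a = b" using \<open>a < k\<close> \<open>b < k\<close> by simp
  qed
  have img: "(\<lambda>a. gcd (Suc a) k) ` VA k \<subseteq> UD k"
  proof
    fix d assume "d \<in> (\<lambda>a. gcd (Suc a) k) ` VA k"
    then obtain a where a: "a \<in> VA k" and d: "d = gcd (Suc a) k" by blast
    have kk: "gcd a k * d = k" using a d unfolding VA_def by auto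
    have dp: "d > 0" using k d by simp
    have "k div d = gcd a k" using kk dp by (metis nonzero_mult_div_cancel_right not_gr0)
    then show "d \<in> UD k" unfolding UD_def using d cop_gcds coprime_commute by auto
  qed
  have sur: "UD k \<subseteq> (\<lambda>a. gcd (Suc a) k) ` VA k"
  proof
    fix d assume dU: "d \<in> UD k"
    define e where "e = k div d"
    have dk: "d dvd k" and cde: "coprime d e" using dU unfolding UD_def e_def by auto
    have ked: "k = e * d" using dk unfolding e_def by simp
    have dp: "d > 0" and ep: "e > 0" using k ked by auto
    have "gcd (int e) (int d) = 1" using cde by (simp add: coprime_commute coprime_iff_gcd_eq_1 gcd_int_def)
    then obtain x y :: int where xy: "x * int e + y * int d = 1" using bezout_int[of "int e" "int d"] by auto
    define a where "a = nat ((- x * int e) mod int k)"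
    have ia: "int a = (- x * int e) mod int k" unfolding a_def using k by simp
    have "int a < int k" using ia k pos_mod_bound[of "int k" "- x * int e"] by simp
    then have "a < k" by simp
    have ek: "int e dvd int k" and dk': "int d dvd int k" using ked by auto
    have ea: "e dvd a"
    proof -
      have "int e dvd (- x * int e) mod int k" using ek by (simp add: dvd_mod_iff)
      then show ?thesis using ia by (metis int_dvd_int_iff)
    qed
    have da: "d dvd Suc a"
    proof -
      have "int (Suc a) mod int d = ((- x * int e) mod int k + 1) mod int d" using ia by (simp add: add.commute)
      also have "\<dots> = (- x * int e + 1) mod int d"
        using dk' by (metis mod_add_left_eq mod_mod_cancel)
      also have "- x * int e + 1 = y * int d" using xy by (simp add: algebra_simps)
      finally have "int d dvd int (Suc a)" by (simp add: mod_eq_0_iff_dvd)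
      then show ?thesis by (metis int_dvd_int_iff)
    qed
    define g1 where "g1 = gcd a k"
    define g2 where "g2 = gcd (Suc a) k"
    have eg: "e dvd g1" using ea ked unfolding g1_def by simp
    have dg: "d dvd g2" using da dk unfolding g2_def by simp
    have "g1 * g2 dvd k" unfolding g1_def g2_def using cop_gcds by (simp add: divides_mult)
    moreover have "k dvd g1 * g2" using ked eg dg by (simp add: mult_dvd_mono)
    ultimately have kg: "g1 * g2 = k" by (simp add: dvd_antisym)
    obtain r where r: "g1 = e * r" using eg by blast
    obtain s where s: "g2 = d * s" using dg by blast
    have "e * d * (r * s) = e * d * 1" using kg ked r s by (simp add: algebra_simps)
    then have "r * s = 1" using dp ep by simp
    then have "s = 1" by simp
    then have "g2 = d" using s by simp
    moreover have "a \<in> VA k" unfolding VA_def using \<open>a < k\<close> kg g1_def g2_def by simp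
    ultimately show "d \<in> (\<lambda>a. gcd (Suc a) k) ` VA k" unfolding g2_def by force
  qed
  show ?thesis unfolding bij_betw_def using inj img sur by blast
qed

lemma VA_finite: "finite (VA k)" unfolding VA_def by simp

lemma UD_finite: assumes "k > 0" shows "finite (UD k)"
proof -
  have "UD k \<subseteq> {..k}" unfolding UD_def using assms by (auto intro: dvd_imp_le)
  then show ?thesis by (rule finite_subset) simp
qed

lemma card_AP: assumes k: "k > 0" shows "card (AP k) = unitary_divisor_sum k"
proof -
  have "card (AP k) = (\<Sum>a\<in>VA k. card {..<gcd (Suc a) k})"
    unfolding AP_Sigma by (rule card_SigmaI) (auto simp: VA_finite)
  also have "\<dots> = (\<Sum>a\<in>VA k. gcd (Suc a) k)" by simp
  also have "\<dots> = (\<Sum>d\<in>UD k. d)"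
    using sum.reindex_bij_betw[OF VA_bij[OF k], of "\<lambda>d. d"] by simp
  finally show ?thesis unfolding unitary_divisor_sum_def UD_def by simp
qed

lemma card_AP_even: assumes k: "k > 0"
  shows "card {p\<in>AP k. even (gcd (Suc (fst p)) k)} = (\<Sum>d\<in>{d\<in>UD k. even d}. d)"
proof -
  let ?h = "\<lambda>a. gcd (Suc a) k"
  have eq: "{p\<in>AP k. even (gcd (Suc (fst p)) k)} = Sigma {a\<in>VA k. even (?h a)} (\<lambda>a. {..<?h a})"
    unfolding AP_Sigma by auto
  have bij: "bij_betw ?h {a\<in>VA k. even (?h a)} {d\<in>UD k. even d}"
  proof (rule bij_betw_subset[OF VA_bij[OF k]])
    show "{a\<in>VA k. even (?h a)} \<subseteq> VA k" by auto
    have "?h ` VA k = UD k" using VA_bij[OF k] by (simp add: bij_betw_def)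
    moreover have "?h ` {a\<in>VA k. even (?h a)} = {d \<in> ?h ` VA k. even d}" by blast
    ultimately show "?h ` {a\<in>VA k. even (?h a)} = {d\<in>UD k. even d}" by (simp only:)
  qed
  have "card {p\<in>AP k. even (gcd (Suc (fst p)) k)} = (\<Sum>a\<in>{a\<in>VA k. even (?h a)}. card {..<?h a})"
    unfolding eq by (rule card_SigmaI) (auto simp: VA_finite)
  also have "\<dots> = (\<Sum>a\<in>{a\<in>VA k. even (?h a)}. ?h a)" by simp
  also have "\<dots> = (\<Sum>d\<in>{d\<in>UD k. even d}. d)"
    using sum.reindex_bij_betw[OF bij, of "\<lambda>d. d"] by simp
  finally show ?thesis .
qed

lemma UD_odd: assumes "odd d" shows "d \<in> UD (2*k) \<longleftrightarrow> d \<in> UD k"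
proof -
  have c2: "coprime d 2" using assms by (simp add: coprime_commute)
  have dv: "d dvd 2*k \<longleftrightarrow> d dvd k" using c2 by (simp add: coprime_dvd_mult_right_iff)
  have "coprime d (2*k div d) \<longleftrightarrow> coprime d (k div d)" if "d dvd k"
  proof -
    have "2*k div d = 2 * (k div d)" using that by (simp add: div_mult_swap)
    then show ?thesis using c2 by simp
  qed
  then show ?thesis unfolding UD_def using dv by auto
qed

lemma UD_even: assumes "even k"
  shows "{d\<in>UD (2*k). even d} = (\<lambda>d. 2*d) ` {d\<in>UD k. even d}"
proof
  show "{d\<in>UD (2*k). even d} \<subseteq> (\<lambda>d. 2*d) ` {d\<in>UD k. even d}"
  proof
    fix d assume "d \<in> {d\<in>UD (2*k). even d}"
    then have d: "d dvd 2*k" "coprime d (2*k div d)" "even d" unfolding UD_def by auto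
    then obtain d' where d': "d = 2*d'" by blast
    have dk: "d' dvd k" using d(1) d' by simp
    have q: "2*k div d = k div d'" using d' by simp
    have c: "coprime (2*d') (k div d')" using d(2) d' q by simp
    have "even d'"
    proof (rule ccontr)
      assume "odd d'"
      have "k = d' * (k div d')" using dk by simp
      then have "even (k div d')" using assms \<open>odd d'\<close> by (metis even_mult_iff)
      then show False using c by simp
    qed
    moreover have "coprime d' (k div d')" using c by simp
    ultimately show "d \<in> (\<lambda>d. 2*d) ` {d\<in>UD k. even d}" unfolding UD_def using dk d' by auto
  qed
  show "(\<lambda>d. 2*d) ` {d\<in>UD k. even d} \<subseteq> {d\<in>UD (2*k). even d}"
  proof
    fix d assume "d \<in> (\<lambda>d. 2*d) ` {d\<in>UD k. even d}"
    then obtain d' where d': "d = 2*d'" "d' dvd k" "coprime d' (k div d')" "even d'"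
      unfolding UD_def by auto
    have "odd (k div d')" using d'(3,4) by auto
    then have "coprime 2 (k div d')" by simp
    then have "coprime (2*d') (k div d')" using d'(3) by simp
    moreover have "2*k div d = k div d'" using d' by simp
    ultimately show "d \<in> {d\<in>UD (2*k). even d}" unfolding UD_def using d' by auto
  qed
qed

lemma s1_diff: assumes k: "k > 0" and e: "even k"
  shows "int (unitary_divisor_sum (2*k)) - int (unitary_divisor_sum k) = int (\<Sum>d\<in>{d\<in>UD k. even d}. d)"
proof -
  have s: "unitary_divisor_sum n = (\<Sum>d\<in>UD n. d)" for n unfolding unitary_divisor_sum_def UD_def by simp
  have f1: "finite (UD k)" and f2: "finite (UD (2*k))" using k UD_finite by auto
  have split: "(\<Sum>d\<in>UD n. d) = (\<Sum>d\<in>{d\<in>UD n. odd d}. d) + (\<Sum>d\<in>{d\<in>UD n. even d}. d)" if "finite (UD n)" for n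
  proof -
    have "UD n = {d\<in>UD n. odd d} \<union> {d\<in>UD n. even d}" by auto
    then have "(\<Sum>d\<in>UD n. d) = (\<Sum>d\<in>{d\<in>UD n. odd d} \<union> {d\<in>UD n. even d}. d)" by simp
    also have "\<dots> = (\<Sum>d\<in>{d\<in>UD n. odd d}. d) + (\<Sum>d\<in>{d\<in>UD n. even d}. d)"
      by (rule sum.union_disjoint) (use that in auto)
    finally show ?thesis .
  qed
  have odd_eq: "{d\<in>UD (2*k). odd d} = {d\<in>UD k. odd d}" using UD_odd by blast
  have "(\<Sum>d\<in>{d\<in>UD (2*k). even d}. d) = (\<Sum>d\<in>(\<lambda>d. 2*d) ` {d\<in>UD k. even d}. d)"
    using UD_even[OF e] by simp
  also have "\<dots> = (\<Sum>d\<in>{d\<in>UD k. even d}. 2*d)"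
    by (subst sum.reindex) (auto simp: inj_on_def)
  also have "\<dots> = 2 * (\<Sum>d\<in>{d\<in>UD k. even d}. d)" by (simp add: sum_distrib_left)
  finally have ev: "(\<Sum>d\<in>{d\<in>UD (2*k). even d}. d) = 2 * (\<Sum>d\<in>{d\<in>UD k. even d}. d)" .
  show ?thesis unfolding s using split[OF f1] split[OF f2] odd_eq ev by simp
qed

lemma UD_odd_k: assumes "odd k" shows "{d\<in>UD k. even d} = {}"
  using assms unfolding UD_def by (auto dest: dvd_trans[of 2])

definition FF :: "complex \<Rightarrow> complex" where "FF w = (1 + w) / (1 - w)"

lemma FF_neg: "FF (- w) = inverse (FF w)" unfolding FF_def by simp

lemma FF_cnj: "cnj (FF w) = FF (cnj w)" unfolding FF_def by simp

lemma cnj_unit: assumes "norm w = 1" shows "cnj w = inverse w"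
proof -
  have "w * cnj w = 1" using complex_norm_square[of w] assms by simp
  then show ?thesis by (metis inverse_unique)
qed

lemma zeta_nz: assumes "primitive_root_of_unity (2*k) z" "k > 0" shows "z \<noteq> 0"
proof
  assume "z = 0"
  then have "z^(2*k) = 0" using assms(2) by simp
  then show False using assms(1) unfolding primitive_root_of_unity_def by simp
qed

lemma zeta_m: assumes "primitive_root_of_unity (2*k) z" shows "z powi (int (2*k)) = 1"
  using assms unfolding primitive_root_of_unity_def by (simp only: power_int_of_nat)

lemma zeta_period: assumes z: "primitive_root_of_unity (2*k) z" and k: "k > 0"
  shows "z powi a = z powi (a mod int (2*k))"
proof -
  define m where "m = int (2*k)"
  have z0: "z \<noteq> 0" using zeta_nz[OF z k] .
  have "a = m * (a div m) + a mod m" by simp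
  then have "z powi a = z powi (m * (a div m)) * z powi (a mod m)"
    by (metis power_int_add z0)
  also have "z powi (m * (a div m)) = (z powi m) powi (a div m)" by (rule power_int_mult)
  also have "\<dots> = 1" using zeta_m[OF z] unfolding m_def by simp
  finally show ?thesis unfolding m_def by simp
qed

lemma zeta_cong: assumes z: "primitive_root_of_unity (2*k) z" and k: "k > 0"
  and "a mod int (2*k) = b mod int (2*k)"
  shows "z powi a = z powi b"
  using zeta_period[OF z k, of a] zeta_period[OF z k, of b] assms(3) by simp

lemma zeta_one: assumes z: "primitive_root_of_unity (2*k) z" and k: "k > 0"
  and e: "z powi a = 1"
  shows "a mod int (2*k) = 0"
proof (rule ccontr)
  define r where "r = a mod int (2*k)"
  assume "a mod int (2*k) \<noteq> 0"
  moreover have "r \<ge> 0" unfolding r_def using k by simp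
  ultimately have r0: "r > 0" unfolding r_def by linarith
  have r1: "r < int (2*k)" unfolding r_def using k by simp
  have "z powi r = 1" using e zeta_period[OF z k, of a] unfolding r_def by simp
  moreover have "z powi r = z ^ nat r" using r0 by (metis power_int_of_nat int_nat_eq order_less_imp_le)
  ultimately have "z ^ nat r = 1" by simp
  moreover have "0 < nat r" "nat r < 2*k" using r0 r1 by auto
  ultimately show False using z unfolding primitive_root_of_unity_def by blast
qed

lemma zeta_k: assumes z: "primitive_root_of_unity (2*k) z" and k: "k > 0"
  shows "z ^ k = -1"
proof -
  have "(z ^ k)^2 = 1" using z unfolding primitive_root_of_unity_def by (simp add: power_mult[symmetric] mult.commute)
  then have "z ^ k = 1 \<or> z ^ k = -1" by (simp add: power2_eq_1_iff)
  moreover have "z ^ k \<noteq> 1" using z k unfolding primitive_root_of_unity_def by simp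
  ultimately show ?thesis by blast
qed

lemma zeta_m1: assumes z: "primitive_root_of_unity (2*k) z" and k: "k > 0"
  and e: "z powi a = -1"
  shows "a mod int (2*k) = int k"
proof -
  have z0: "z \<noteq> 0" using zeta_nz[OF z k] .
  have "z powi (a - int k) = z powi a * z powi (- int k)"
    by (metis diff_conv_add_uminus power_int_add z0)
  also have "\<dots> = 1" using e zeta_k[OF z k] by (simp add: power_int_minus)
  finally have "(a - int k) mod int (2*k) = 0" using zeta_one[OF z k] by blast
  then have "int (2*k) dvd a - int k" by (simp only: mod_eq_0_iff_dvd)
  then have "a mod int (2*k) = int k mod int (2*k)" by (simp only: mod_eq_dvd_iff)
  moreover have "int k mod int (2*k) = int k" using k by (intro mod_pos_pos_trivial) auto
  ultimately show ?thesis by simp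
qed

lemma zeta_norm: assumes z: "primitive_root_of_unity (2*k) z" and k: "k > 0"
  shows "norm (z powi a) = 1"
proof -
  have "norm z ^ (2*k) = 1" using z unfolding primitive_root_of_unity_def by (simp add: norm_power[symmetric])
  then have "norm z ^ (2*k) = 1 ^ (2*k)" by simp
  then have "norm z = 1" using k by (subst (asm) power_eq_iff_eq_base) auto
  then show ?thesis by (simp add: norm_power_int)
qed

lemma zeta_cnj: assumes z: "primitive_root_of_unity (2*k) z" and k: "k > 0"
  shows "cnj (z powi a) = z powi (- a)"
  using cnj_unit[OF zeta_norm[OF z k, of a]] by (simp add: power_int_minus)

lemma prod_invol_nonneg:
  fixes g :: "nat \<Rightarrow> complex"
  assumes "finite A" "\<forall>x\<in>A. \<sigma> x \<in> A \<and> \<sigma> (\<sigma> x) = x \<and> \<sigma> x \<noteq> x"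
    "\<forall>x\<in>A. \<exists>r\<ge>0. g x * g (\<sigma> x) = of_real r"
  shows "\<exists>r\<ge>0. prod g A = of_real r"
  using assms
proof (induction "card A" arbitrary: A rule: less_induct)
  case less
  show ?case
  proof (cases "A = {}")
    case True
    then show ?thesis by (intro exI[of _ 1]) simp
  next
    case False
    then obtain a where a: "a \<in> A" by blast
    define B where "B = A - {a, \<sigma> a}"
    have sa: "\<sigma> a \<in> A" "\<sigma> a \<noteq> a" using less.prems a by auto
    have fB: "finite B" using less.prems unfolding B_def by simp
    have "B \<subset> A" unfolding B_def using a by blast
    then have cB: "card B < card A" using less.prems(1) by (simp add: psubset_card_mono)
    have inv: "\<forall>x\<in>B. \<sigma> x \<in> B \<and> \<sigma> (\<sigma> x) = x \<and> \<sigma> x \<noteq> x"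
    proof
      fix x assume x: "x \<in> B"
      have xA: "x \<in> A" "x \<noteq> a" "x \<noteq> \<sigma> a" using x unfolding B_def by auto
      have sx: "\<sigma> (\<sigma> x) = x" "\<sigma> x \<in> A" "\<sigma> x \<noteq> x" using xA(1) less.prems(2) by auto
      have ssa: "\<sigma> (\<sigma> a) = a" using a less.prems(2) by auto
      have "\<sigma> x \<noteq> a" using sx(1) xA(3) by auto
      moreover have "\<sigma> x \<noteq> \<sigma> a" using sx(1) ssa xA(2) by auto
      ultimately show "\<sigma> x \<in> B \<and> \<sigma> (\<sigma> x) = x \<and> \<sigma> x \<noteq> x" using sx unfolding B_def by auto
    qed
    have pos: "\<forall>x\<in>B. \<exists>r\<ge>0. g x * g (\<sigma> x) = of_real r" using less.prems(3) unfolding B_def by auto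
    obtain r where r: "r \<ge> 0" "prod g B = of_real r" using less.hyps[OF cB fB inv pos] by blast
    obtain s where s: "s \<ge> 0" "g a * g (\<sigma> a) = of_real s" using less.prems(3) a by blast
    have "prod g A = g a * prod g (A - {a})" using less.prems(1) a by (simp add: prod.remove)
    also have "prod g (A - {a}) = g (\<sigma> a) * prod g (A - {a} - {\<sigma> a})"
      using less.prems(1) sa by (intro prod.remove) auto
    also have "A - {a} - {\<sigma> a} = B" unfolding B_def by blast
    finally have "prod g A = of_real (s * r)" using r s by (simp add: mult.assoc)
    then show ?thesis using r s by (intro exI[of _ "s*r"]) simp
  qed
qed

lemma pif_cong:
  assumes "m > 0"
  shows "(int j - int (pif m u (2*a+1) j)) mod int m = (- int (2*a*j + u)) mod int m"
proof -
  have "int (pif m u (2*a+1) j) = int ((2*a+1)*j + u) mod int m" unfolding pif_def by (simp add: of_nat_mod)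
  then have "(int j - int (pif m u (2*a+1) j)) mod int m = (int j - int ((2*a+1)*j + u)) mod int m"
    by (simp add: mod_diff_right_eq)
  also have "int j - int ((2*a+1)*j + u) = - int (2*a*j + u)" by (simp add: algebra_simps)
  finally show ?thesis .
qed

lemma shift_bij:
  fixes m c :: nat
  assumes "m > 0"
  shows "bij_betw (\<lambda>j. (j + c) mod m) {0..<m} {0..<m}"
proof -
  have inj: "inj_on (\<lambda>j. (j + c) mod m) {0..<m}"
  proof (rule inj_onI)
    fix x y assume x: "x \<in> {0..<m}" and y: "y \<in> {0..<m}" and e: "(x + c) mod m = (y + c) mod m"
    have "int (x + c) mod int m = int (y + c) mod int m" using e by (metis of_nat_mod)
    then have "int m dvd int (x + c) - int (y + c)" by (simp only: mod_eq_dvd_iff)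
    then have "int m dvd int x - int y" by simp
    then have "int x mod int m = int y mod int m" by (simp only: mod_eq_dvd_iff)
    then have "x mod m = y mod m" by (metis of_nat_eq_iff of_nat_mod)
    then show "x = y" using x y by simp
  qed
  have sub: "(\<lambda>j. (j + c) mod m) ` {0..<m} \<subseteq> {0..<m}" using assms by auto
  show ?thesis unfolding bij_betw_def using inj endo_inj_surj[OF _ sub inj] by simp
qed

lemma prod_val:
  assumes k: "k > 0" and z: "primitive_root_of_unity (2*k) z" and A: "(a,t) \<in> AP k"
  shows "(\<Prod>j\<in>{0..<2*k}. FF (z powi (int j - int (pif (2*k) (gcd a k * (2*t+1)) (2*a+1) j))))
         = (if even (gcd (Suc a) k) then 1 else 0)"
proof -
  define u where "u = gcd a k * (2*t+1)"
  define v where "v = 2*a+1"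
  define m where "m = 2*k"
  define g1 where "g1 = gcd a k"
  define g2 where "g2 = gcd (Suc a) k"
  have mp: "m > 0" using k m_def by simp
  have kg: "g1 * g2 = k" using A unfolding AP_def g1_def g2_def by simp
  have g1p: "g1 > 0" using k g1_def by simp
  have SPm: "(u,v) \<in> SP m" using AP_SP[OF k A] unfolding psi_def u_def v_def m_def by simp
  have "m = (2*g1)*g2" using kg m_def by simp
  then have m2g: "2*g1 dvd m" by simp
  have gg: "gcd (2*a) m = 2*g1" unfolding g1_def m_def by (simp add: gcd_mult_distrib_nat)
  have u2: "u + k = g1 * (2*t+1+g2)" unfolding u_def g1_def[symmetric] using kg by (simp add: algebra_simps)
  define W where "W j = z powi (- int (2*a*j + u))" for j
  have gW: "z powi (int j - int (pif m u v j)) = W j" for j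
  proof -
    have "(int j - int (pif m u v j)) mod int (2*k) = (- int (2*a*j + u)) mod int (2*k)"
      using pif_cong[OF mp, of j u a] unfolding v_def m_def by simp
    then show ?thesis unfolding W_def by (rule zeta_cong[OF z k])
  qed
  have LHS: "(\<Prod>j\<in>{0..<2*k}. FF (z powi (int j - int (pif (2*k) (gcd a k * (2*t+1)) (2*a+1) j))))
     = (\<Prod>j\<in>{0..<m}. FF (W j))"
    unfolding u_def[symmetric] v_def[symmetric] m_def[symmetric] gW ..
  have main: "(\<Prod>j\<in>{0..<m}. FF (W j)) = (if even g2 then 1 else 0)"
  proof (cases "even g2")
    case False
    have "even (2*t+1+g2)" using False by simp
    then obtain e where e: "2*t+1+g2 = 2*e" by blast
    have "u + k = (2*g1)*e" unfolding u2 e by simp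
    then have "2*g1 dvd u + k" by simp
    then obtain j0 where j0: "m dvd 2*a*j0 + (u + k)" using lin_solv[of m "2*a" "u+k"] mp gg by auto
    define j where "j = j0 mod m"
    have jm: "j \<in> {0..<m}" using mp j_def by simp
    have "(2*a*j + (u+k)) mod m = (2*a*j0 + (u+k)) mod m" unfolding j_def by (rule mod_aff)
    then have "m dvd 2*a*j + (u+k)" using j0 by (simp add: mod_eq_0_iff_dvd[symmetric])
    then have "int m dvd int (2*a*j + (u + k))" by (simp only: int_dvd_int_iff)
    then have h1: "int m dvd - int (2*a*j + (u + k))" by (simp only: dvd_minus_iff)
    have h2: "- int (2*a*j + (u + k)) = - int (2*a*j + u) - int k" by simp
    have "int m dvd - int (2*a*j + u) - int k" using h1 unfolding h2 .
    then have "(- int (2*a*j + u)) mod int m = int k mod int m" by (simp only: mod_eq_dvd_iff)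
    then have "(- int (2*a*j + u)) mod int (2*k) = int k mod int (2*k)" unfolding m_def .
    then have "W j = z powi (int k)" unfolding W_def by (rule zeta_cong[OF z k])
    also have "\<dots> = -1" using zeta_k[OF z k] by simp
    finally have "FF (W j) = 0" unfolding FF_def by simp
    then have "(\<Prod>j\<in>{0..<m}. FF (W j)) = 0" using jm by (intro prod_zero) auto
    then show ?thesis using False by simp
  next
    case True
    define P where "P = (\<Prod>j\<in>{0..<m}. FF (W j))"
    define g where "g j = FF (z powi (int j - int (pif m u v j)))" for j
    have Pg: "P = prod g {0..<m}" unfolding P_def g_def gW ..
    have inv: "\<forall>x\<in>{0..<m}. pif m u v x \<in> {0..<m} \<and> pif m u v (pif m u v x) = x \<and> pif m u v x \<noteq> x"
      using SPm mp unfolding SP_def pif_def by auto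
    have pairs: "\<forall>x\<in>{0..<m}. \<exists>r\<ge>0. g x * g (pif m u v x) = of_real r"
    proof
      fix x assume x: "x \<in> {0..<m}"
      have "g (pif m u v x) = FF (z powi (int (pif m u v x) - int x))"
        unfolding g_def using inv x by simp
      also have "int (pif m u v x) - int x = - (int x - int (pif m u v x))" by simp
      also have "z powi \<dots> = cnj (z powi (int x - int (pif m u v x)))"
        using zeta_cnj[OF z k] by simp
      finally have "g (pif m u v x) = cnj (g x)" unfolding g_def FF_cnj by simp
      then have "g x * g (pif m u v x) = of_real ((norm (g x))^2)" by (simp only: complex_norm_square)
      then show "\<exists>r\<ge>0. g x * g (pif m u v x) = of_real r" by (intro exI[of _ "(norm (g x))^2"]) simp
    qed
    obtain r where r: "r \<ge> 0" "P = of_real r"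
      using prod_invol_nonneg[OF _ inv pairs] Pg by auto
    have Wn1: "W j \<noteq> -1" for j
    proof
      assume "W j = -1"
      then have "(- int (2*a*j + u)) mod int m = int k" using zeta_m1[OF z k] unfolding W_def m_def by blast
      then have "(- int (2*a*j + u)) mod int m = int k mod int m" using k m_def by simp
      then have "int m dvd - int (2*a*j + u) - int k" by (simp only: mod_eq_dvd_iff)
      moreover have "- int (2*a*j + u) - int k = - int (2*a*j + u + k)" by simp
      ultimately have "int m dvd - int (2*a*j + u + k)" by simp
      then have "int m dvd int (2*a*j + u + k)" by (simp only: dvd_minus_iff)
      then have "m dvd 2*a*j + u + k" by (simp only: int_dvd_int_iff)
      then have "m dvd 2*a*j + (u + k)" by (simp add: add.assoc)
      moreover have "2*g1 dvd m" using m2g .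
      ultimately have "2*g1 dvd 2*a*j + (u + k)" by (rule dvd_trans[rotated])
      moreover have "2*g1 dvd 2*a*j" unfolding g1_def by (simp add: mult_dvd_mono)
      ultimately have "2*g1 dvd u + k" by (simp add: dvd_add_right_iff)
      then have "g1 * 2 dvd g1 * (2*t+1+g2)" unfolding u2 by (simp add: mult.commute)
      then have "2 dvd 2*t+1+g2" using g1p nat_mult_dvd_cancel1 by blast
      then show False using True by simp
    qed
    have W1: "W j \<noteq> 1" for j
    proof
      assume "W j = 1"
      then have "(- int (2*a*j + u)) mod int m = 0" using zeta_one[OF z k] unfolding W_def m_def by blast
      then have "int m dvd - int (2*a*j + u)" by (simp only: mod_eq_0_iff_dvd)
      then have "int m dvd int (2*a*j + u)" by (simp only: dvd_minus_iff)
      then have "m dvd 2*a*j + u" by (simp only: int_dvd_int_iff)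
      moreover have "2*g1 dvd m" using m2g .
      ultimately have "2*g1 dvd 2*a*j + u" by (rule dvd_trans[rotated])
      moreover have "2*g1 dvd 2*a*j" unfolding g1_def by (simp add: mult_dvd_mono)
      ultimately have "2*g1 dvd u" by (simp add: dvd_add_right_iff)
      then have "g1 * 2 dvd g1 * (2*t+1)" unfolding u_def g1_def[symmetric] by (simp add: mult.commute)
      then have "2 dvd 2*t+1" using g1p nat_mult_dvd_cancel1 by blast
      then show False by simp
    qed
    have FFnz: "FF (W j) \<noteq> 0" for j
      using Wn1[of j] W1[of j] unfolding FF_def by (auto simp: add_eq_0_iff)
    have P0: "P \<noteq> 0" unfolding P_def using FFnz by (simp add: prod_zero_iff)
    obtain e where e: "g2 = 2*e" using True by blast
    have "k = (2*g1)*e" using kg e by simp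
    then have "2*g1 dvd k" by simp
    then obtain c where c: "m dvd 2*a*c + k" using lin_solv[of m "2*a" k] mp gg by auto
    have Wsh: "W ((j + c) mod m) = - W j" for j
    proof -
      define q where "q = (j + c) div m"
      have "(j + c) mod m + m * q = j + c" unfolding q_def by simp
      then have "int ((j + c) mod m + m * q) = int (j + c)" by (rule arg_cong)
      then have "int ((j + c) mod m) + int m * int q = int j + int c" by simp
      then have jq: "int ((j + c) mod m) = int j + int c - int m * int q" by linarith
      have e0: "int (2*a*((j + c) mod m) + u) = 2*int a*int ((j + c) mod m) + int u" by simp
      have e1: "int (2*a*((j + c) mod m) + u) = 2*int a*(int j + int c - int m*int q) + int u"
        using e0 unfolding jq .
      obtain s where s: "2*a*c + k = m * s" using c by blast
      have "int (2*a*c + k) = int (m * s)" using s by simp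
      then have si: "int (2*a*c) + int k = int m * int s" by simp
      have "(- int (2*a*((j + c) mod m) + u)) - (- int (2*a*j + u) + int k)
            = - (int (2*a*c) + int k) + int m * (2 * int a * int q)"
        unfolding e1 by (simp add: algebra_simps)
      also have "\<dots> = int m * (2 * int a * int q - int s)" using si by (simp add: algebra_simps)
      finally have "int m dvd (- int (2*a*((j + c) mod m) + u)) - (- int (2*a*j + u) + int k)" by simp
      then have "(- int (2*a*((j + c) mod m) + u)) mod int m = (- int (2*a*j + u) + int k) mod int m"
        by (simp only: mod_eq_dvd_iff)
      then have "(- int (2*a*((j + c) mod m) + u)) mod int (2*k) = (- int (2*a*j + u) + int k) mod int (2*k)"
        unfolding m_def .
      then have "W ((j + c) mod m) = z powi (- int (2*a*j + u) + int k)"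
        unfolding W_def by (rule zeta_cong[OF z k])
      also have "\<dots> = W j * z powi (int k)"
        unfolding W_def using zeta_nz[OF z k] by (simp add: power_int_add)
      also have "\<dots> = - W j" using zeta_k[OF z k] by simp
      finally show ?thesis .
    qed
    have "P = (\<Prod>j\<in>{0..<m}. FF (W ((j + c) mod m)))"
      unfolding P_def using prod.reindex_bij_betw[OF shift_bij[OF mp, of c], of "\<lambda>j. FF (W j)"] by simp
    also have "\<dots> = (\<Prod>j\<in>{0..<m}. inverse (FF (W j)))" unfolding Wsh FF_neg ..
    also have "\<dots> = inverse P" unfolding P_def using prod_inversef[of "\<lambda>j. FF (W j)" "{0..<m}"] by (simp add: comp_def)
    finally have "P = inverse P" .
    then have "P * P = P * inverse P" by (rule arg_cong)
    then have "P * P = 1" using P0 by simp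
    then have "of_real (r * r) = (1::complex)" using r(2) by simp
    then have "r * r = 1" by (simp only: of_real_eq_1_iff)
    then have "sqrt (r * r) = 1" by simp
    then have "r = 1" using r(1) by (simp add: real_sqrt_mult_self)
    then have "P = 1" using r by simp
    then show ?thesis using True unfolding P_def by simp
  qed
  show ?thesis unfolding LHS g2_def[symmetric] by (rule main)
qed

lemma sum_ind: "finite A \<Longrightarrow> (\<Sum>q\<in>A. if P q then (1::complex) else 0) = of_nat (card {q\<in>A. P q})"
  by (simp add: sum.inter_filter[symmetric])

definition phi :: "nat \<Rightarrow> nat \<times> nat \<Rightarrow> (nat \<Rightarrow> nat)" where
  "phi m = (\<lambda>(u,v). restrict (pif m u v) {0..<m})"

lemma Q_img: assumes k: "k > 0" shows "Q k = phi (2*k) ` SP (2*k)"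
proof -
  define m where "m = 2*k"
  have mp: "m > 0" using k m_def by simp
  have r: "restrict (\<lambda>x. (v * x + u) mod m) {0..<m} = restrict (pif m u v) {0..<m}" for u v
    unfolding pif_def ..
  have "quasipolarities m = phi m ` SP m"
  proof
    show "quasipolarities m \<subseteq> phi m ` SP m"
    proof
      fix \<pi> assume "\<pi> \<in> quasipolarities m"
      then obtain u v where uv: "u < m" "v < m" "coprime v m" and pe: "\<pi> = restrict (pif m u v) {0..<m}"
        and inv: "\<forall>x\<in>{0..<m}. \<pi> (\<pi> x) = x" and der: "\<forall>x\<in>{0..<m}. \<pi> x \<noteq> x"
        unfolding quasipolarities_def affine_maps_def r by blast
      have lt: "pif m u v x < m" for x using mp unfolding pif_def by simp
      have "(u,v) \<in> SP m" unfolding SP_def using uv inv der lt unfolding pe by auto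
      then show "\<pi> \<in> phi m ` SP m" unfolding phi_def pe by force
    qed
    show "phi m ` SP m \<subseteq> quasipolarities m"
    proof
      fix \<pi> assume "\<pi> \<in> phi m ` SP m"
      then obtain u v where S: "(u,v) \<in> SP m" and pe: "\<pi> = restrict (pif m u v) {0..<m}"
        unfolding phi_def by auto
      have lt: "pif m u v x < m" for x using mp unfolding pif_def by simp
      have "\<pi> \<in> affine_maps m" unfolding affine_maps_def r pe using S unfolding SP_def by auto
      moreover have "\<forall>x\<in>{0..<m}. \<pi> (\<pi> x) = x" "\<forall>x\<in>{0..<m}. \<pi> x \<noteq> x"
        using S lt unfolding SP_def pe by auto
      ultimately show "\<pi> \<in> quasipolarities m" unfolding quasipolarities_def by blast
    qed
  qed
  then show ?thesis unfolding Q_def m_def .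
qed

lemma phi_inj: assumes k: "k > 0" shows "inj_on (phi (2*k)) (SP (2*k))"
proof (rule inj_onI)
  define m where "m = 2*k"
  have mp: "m > 0" using k m_def by simp
  fix p q assume p: "p \<in> SP (2*k)" and q: "q \<in> SP (2*k)" and e: "phi (2*k) p = phi (2*k) q"
  obtain u v where puv: "p = (u,v)" by fastforce
  obtain u' v' where quv: "q = (u',v')" by fastforce
  have b1: "u < m" "v < m" using p unfolding puv SP_def m_def by auto
  have b2: "u' < m" "v' < m" using q unfolding quv SP_def m_def by auto
  have re: "restrict (pif m u v) {0..<m} = restrict (pif m u' v') {0..<m}"
    using e unfolding phi_def puv quv m_def by simp
  have pe: "pif m u v x = pif m u' v' x" if "x < m" for x
  proof -
    have "restrict (pif m u v) {0..<m} x = restrict (pif m u' v') {0..<m} x" using re by (rule fun_cong)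
    then show ?thesis using that by simp
  qed
  have "u mod m = u' mod m" using pe[OF mp] unfolding pif_def by (simp only: mult_0_right add_0)
  then have uu: "u = u'" using b1 b2 by (metis mod_less)
  have 1: "1 < m" using k m_def by simp
  have "(v + u) mod m = (v' + u) mod m" using pe[OF 1] unfolding pif_def uu by (simp only: mult_1_right)
  then have "v = v'"
    by (rule inj_onD[OF bij_betw_imp_inj_on[OF shift_bij[OF mp, of u]]]) (use b1 b2 in auto)
  then show "p = q" using puv quv uu by simp
qed

lemma card_Q: assumes k: "k > 0" shows "card (Q k) = unitary_divisor_sum k"
proof -
  have "card (Q k) = card (SP (2*k))" unfolding Q_img[OF k] by (rule card_image[OF phi_inj[OF k]])
  also have "\<dots> = card (AP k)" unfolding SP_eq[OF k] by (rule card_image[OF psi_inj[OF k]])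
  also have "\<dots> = unitary_divisor_sum k" by (rule card_AP[OF k])
  finally show ?thesis .
qed

lemma sum_Q:
  assumes k: "k > 0" and z: "primitive_root_of_unity (2*k) z"
  shows "(\<Sum>\<pi>\<in>Q k. \<Prod>j\<in>{0..<2*k}. (1 + z powi (int j - int (\<pi> j))) / (1 - z powi (int j - int (\<pi> j))))
       = of_nat (\<Sum>d\<in>{d\<in>UD k. even d}. d)"
proof -
  define G where "G \<pi> = (\<Prod>j\<in>{0..<2*k}. (1 + z powi (int j - int (\<pi> j))) / (1 - z powi (int j - int (\<pi> j))))" for \<pi> :: "nat \<Rightarrow> nat"
  have "(\<Sum>\<pi>\<in>Q k. G \<pi>) = (\<Sum>p\<in>SP (2*k). G (phi (2*k) p))"
    unfolding Q_img[OF k] by (rule sum.reindex[OF phi_inj[OF k], unfolded comp_def])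
  also have "\<dots> = (\<Sum>q\<in>AP k. G (phi (2*k) (psi k q)))"
    unfolding SP_eq[OF k] by (rule sum.reindex[OF psi_inj[OF k], unfolded comp_def])
  also have "\<dots> = (\<Sum>q\<in>AP k. if even (gcd (Suc (fst q)) k) then 1 else 0)"
  proof (rule sum.cong[OF refl])
    fix q assume qA: "q \<in> AP k"
    obtain a t where qat: "q = (a,t)" by fastforce
    have "G (phi (2*k) (psi k q)) =
      (\<Prod>j\<in>{0..<2*k}. FF (z powi (int j - int (pif (2*k) (gcd a k * (2*t+1)) (2*a+1) j))))"
      unfolding G_def phi_def psi_def qat FF_def by (intro prod.cong) auto
    also have "\<dots> = (if even (gcd (Suc a) k) then 1 else 0)"
      using prod_val[OF k z] qA qat by simp
    finally show "G (phi (2*k) (psi k q)) = (if even (gcd (Suc (fst q)) k) then 1 else 0)"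
      using qat by simp
  qed
  also have "\<dots> = of_nat (card {q\<in>AP k. even (gcd (Suc (fst q)) k)})"
    by (rule sum_ind[OF AP_finite])
  also have "\<dots> = of_nat (\<Sum>d\<in>{d\<in>UD k. even d}. d)" using card_AP_even[OF k] by simp
  finally show ?thesis unfolding G_def .
qed

theorem theorem2p2:
  fixes k :: nat and \<zeta> :: complex
  assumes "k > 0" and "primitive_root_of_unity (2 * k) \<zeta>"
  shows "(\<Sum>\<pi>\<in>Q k. \<Prod>j\<in>{0..<2*k}.
            (1 + \<zeta> powi (int j - int (\<pi> j))) / (1 - \<zeta> powi (int j - int (\<pi> j))))
         = of_int ((if even k then 1 else 0) * (int (card (Q (2 * k))) - int (card (Q k))))
   \<and> (if even k then 1 else 0) * (int (card (Q (2 * k))) - int (card (Q k)))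
         = (if even k then 1 else 0) * (int (unitary_divisor_sum (2 * k)) - int (unitary_divisor_sum k))"
proof -
  have k2: "2*k > 0" using assms(1) by simp
  have c1: "card (Q k) = unitary_divisor_sum k" by (rule card_Q[OF assms(1)])
  have c2: "card (Q (2*k)) = unitary_divisor_sum (2*k)" by (rule card_Q[OF k2])
  have r: "(if even k then 1 else 0) * (int (unitary_divisor_sum (2 * k)) - int (unitary_divisor_sum k))
        = int (\<Sum>d\<in>{d\<in>UD k. even d}. d)"
  proof (cases "even k")
    case True
    then show ?thesis using s1_diff[OF assms(1) True] by simp
  next
    case False
    have e: "{d\<in>UD k. even d} = {}" by (rule UD_odd_k[OF False])
    show ?thesis using False unfolding e by simp
  qed
  show ?thesis unfolding c1 c2 r sum_Q[OF assms] by simp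
qed

end
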